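(* Let $H$ be an $r$-graph with $h$ vertices. Then $$C_r(n,H)=O\!\left(n^{\frac{h-r}{h}}\cdot h^{2r+\frac{r}{h}}\right).$$
   Context: An $r$-graph is an $r$-uniform hypergraph; $K_n^{(r)}$ is the complete $r$-graph on $n$ vertices. A copy of an $r$-graph $H$ in $K_n^{(r)}$ is a subhypergraph isomorphic to $H$. An $(n,r,H)$-local coloring with $k$ colors is a family of edge-colorings $f_v:E(K_n^{(r)})\to[k]$, one per vertex $v$, such that for every copy $T$ of $H$ there is $u\in V(T)$ with $f_u$ injective on $E(T)$. $C_r(n,H)$ is the minimum such $k$. *)

theory Defs
  imports Complex_Main
begin

definition complete_edges :: "nat \<Rightarrow> nat \<Rightarrow> nat set set" where
  "complete_edges n r = {e. e \<subseteq> {..<n} \<and> card e = r}"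

definition is_rgraph :: "nat \<Rightarrow> 'a set \<Rightarrow> 'a set set \<Rightarrow> bool" where
  "is_rgraph r V E \<longleftrightarrow> finite V \<and> E \<subseteq> {e. e \<subseteq> V \<and> card e = r}"

definition is_copy :: "nat \<Rightarrow> 'a set \<Rightarrow> 'a set set \<Rightarrow> nat set \<Rightarrow> nat set set \<Rightarrow> bool" where
  "is_copy n V E W F \<longleftrightarrow> W \<subseteq> {..<n} \<and> (\<exists>g. bij_betw g V W \<and> F = (\<lambda>e. g ` e) ` E)"

text \<open>An (n,r,H)-local colouring with k colours (colours {1..k}): one edge colouring
  f v per vertex v, such that every copy T of H has a vertex u with f u injective on E(T).\<close>
definition local_coloring ::
  "nat \<Rightarrow> nat \<Rightarrow> 'a set \<Rightarrow> 'a set set \<Rightarrow> nat \<Rightarrow> (nat \<Rightarrow> nat set \<Rightarrow> nat) \<Rightarrow> bool" where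
  "local_coloring n r V E k f \<longleftrightarrow>
     (\<forall>v<n. \<forall>e\<in>complete_edges n r. f v e \<in> {1..k}) \<and>
     (\<forall>W F. is_copy n V E W F \<longrightarrow> (\<exists>u\<in>W. inj_on (f u) F))"

definition local_chromatic :: "nat \<Rightarrow> nat \<Rightarrow> 'a set \<Rightarrow> 'a set set \<Rightarrow> nat" where
  "local_chromatic r n V E = (LEAST k. \<exists>f. local_coloring n r V E k f)"

end

theory Submission
  imports Defs "HOL-Library.FuncSet"
begin


lemma lll_simple:
  fixes Om :: "'w set" and A :: "'i \<Rightarrow> 'w set" and I :: "'i set" and N :: "'i \<Rightarrow> 'i set"
  assumes fin: "finite Om" and ne: "Om \<noteq> {}" and finI: "finite I"
    and NI: "\<And>i. i \<in> I \<Longrightarrow> N i \<subseteq> I"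
    and deg: "\<And>i. i \<in> I \<Longrightarrow> real (card (N i)) \<le> d"
    and d1: "1 \<le> d" and p0: "0 \<le> p" and pd: "4 * p * d \<le> 1"
    and ind: "\<And>i T. i \<in> I \<Longrightarrow> T \<subseteq> I - N i - {i} \<Longrightarrow>
       real (card (A i \<inter> (Om - \<Union>(A ` T)))) \<le> p * real (card (Om - \<Union>(A ` T)))"
  shows "Om - \<Union>(A ` I) \<noteq> {}"
proof -
  define B where "B T = Om - \<Union>(A ` T)" for T
  have finB: "finite (B T)" for T using fin by (auto simp: B_def)
  have claim: "0 < real (card (B S)) \<and> (\<forall>i\<in>I-S. real (card (A i \<inter> B S)) \<le> real (card (B S)) / (2*d))"
    if "S \<subseteq> I" for S
    using finite_subset[OF that finI] that
  proof (induction S rule: finite_psubset_induct)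
    case (psubset S)
    have part2: "real (card (A i \<inter> B S)) \<le> real (card (B S)) / (2*d)" if i: "i \<in> I - S" for i
    proof -
      define S1 where "S1 = S \<inter> N i"
      define S2 where "S2 = S - N i"
      have S2T: "S2 \<subseteq> I - N i - {i}" using psubset.prems i by (auto simp: S2_def)
      have BSS2: "B S \<subseteq> B S2" by (auto simp: B_def S2_def)
      have a1: "real (card (A i \<inter> B S)) \<le> real (card (A i \<inter> B S2))"
        using BSS2 finB by (intro of_nat_mono card_mono) auto
      have a2: "real (card (A i \<inter> B S2)) \<le> p * real (card (B S2))"
        using ind[of i S2] i S2T by (simp add: B_def)
      show ?thesis
      proof (cases "S1 = {}")
        case True
        then have "S2 = S" by (auto simp: S1_def S2_def)
        have "p \<le> 1/(2*d)" using pd d1 by (simp add: field_simps)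
        hence "p * real (card (B S)) \<le> 1/(2*d) * real (card (B S))"
          by (intro mult_right_mono) auto
        then show ?thesis using a1 a2 \<open>S2 = S\<close> by simp
      next
        case False
        have sub: "S2 \<subset> S" using False by (auto simp: S1_def S2_def)
        have IH: "0 < real (card (B S2)) \<and> (\<forall>j\<in>I-S2. real (card (A j \<inter> B S2)) \<le> real (card (B S2)) / (2*d))"
          using psubset.IH[OF sub] psubset.prems sub by auto
        have finS1: "finite S1" using psubset.hyps by (auto simp: S1_def)
        have cover: "B S2 \<subseteq> B S \<union> (\<Union>j\<in>S1. A j \<inter> B S2)" by (auto simp: B_def S1_def S2_def)
        have "card (B S2) \<le> card (B S \<union> (\<Union>j\<in>S1. A j \<inter> B S2))"
          by (rule card_mono) (use finB finS1 cover in auto)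
        also have "\<dots> \<le> card (B S) + card (\<Union>j\<in>S1. A j \<inter> B S2)" by (rule card_Un_le)
        also have "card (\<Union>j\<in>S1. A j \<inter> B S2) \<le> (\<Sum>j\<in>S1. card (A j \<inter> B S2))"
          by (rule card_UN_le) (rule finS1)
        finally have c1: "real (card (B S2)) \<le> real (card (B S)) + (\<Sum>j\<in>S1. real (card (A j \<inter> B S2)))"
          by (simp flip: of_nat_sum of_nat_add)
        have S1I: "S1 \<subseteq> I - S2" using psubset.prems i NI[of i] by (auto simp: S1_def S2_def)
        have "(\<Sum>j\<in>S1. real (card (A j \<inter> B S2))) \<le> (\<Sum>j\<in>S1. real (card (B S2)) / (2*d))"
          using IH S1I by (intro sum_mono) auto
        also have "\<dots> = real (card S1) * (real (card (B S2)) / (2*d))" by simp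
        also have "\<dots> \<le> d * (real (card (B S2)) / (2*d))"
        proof (rule mult_right_mono)
          have "card S1 \<le> card (N i)" using NI[of i] i finI
            by (intro card_mono) (auto simp: S1_def intro: finite_subset)
          then show "real (card S1) \<le> d" using deg[of i] i by simp
        qed (use d1 in auto)
        also have "\<dots> = real (card (B S2)) / 2" using d1 by simp
        finally have "real (card (B S2)) \<le> 2 * real (card (B S))" using c1 by simp
        hence "p * real (card (B S2)) \<le> p * (2 * real (card (B S)))" using p0 by (intro mult_left_mono) auto
        also have "\<dots> \<le> real (card (B S)) / (2*d)"
        proof -
          have "2 * p \<le> 1/(2*d)" using pd d1 by (simp add: field_simps)
          hence "2 * p * real (card (B S)) \<le> 1/(2*d) * real (card (B S))"
            by (intro mult_right_mono) auto
          thus ?thesis by simp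
        qed
        finally show ?thesis using a1 a2 by simp
      qed
    qed
    have part1: "0 < real (card (B S))"
    proof (cases "S = {}")
      case True
      then show ?thesis using fin ne by (simp add: B_def card_gt_0_iff)
    next
      case False
      then obtain s where s: "s \<in> S" by auto
      have sub: "S - {s} \<subset> S" using s by auto
      have IH: "0 < real (card (B (S - {s}))) \<and> (\<forall>j\<in>I-(S-{s}). real (card (A j \<inter> B (S-{s}))) \<le> real (card (B (S-{s}))) / (2*d))"
        using psubset.IH[OF sub] psubset.prems sub by auto
      have eq: "B (S - {s}) = B S \<union> (A s \<inter> B (S - {s}))" "B S \<inter> (A s \<inter> B (S - {s})) = {}"
        using s by (auto simp: B_def)
      have "card (B (S - {s})) = card (B S) + card (A s \<inter> B (S - {s}))"
        using eq finB by (metis card_Un_disjoint finite_Int)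
      moreover have "real (card (A s \<inter> B (S-{s}))) \<le> real (card (B (S-{s}))) / (2*d)"
        using IH s psubset.prems by auto
      moreover have "real (card (B (S-{s}))) / (2*d) < real (card (B (S-{s})))"
        using IH d1 by (simp add: field_simps)
      ultimately show ?thesis by linarith
    qed
    show ?case using part1 part2 by blast
  qed
  from claim[of I] have "0 < card (B I)" by simp
  hence "B I \<noteq> {}" by (metis card.empty less_irrefl)
  thus ?thesis by (simp add: B_def)
qed

lemma card_split:
  assumes finX: "finite X" and DX: "D \<subseteq> X"
  shows "card {f \<in> PiE X (\<lambda>_. C). P (restrict f D) \<and> Q (restrict f (X - D))}
       = card {g \<in> PiE D (\<lambda>_. C). P g} * card {h \<in> PiE (X - D) (\<lambda>_. C). Q h}"
proof -
  let ?L = "{f \<in> PiE X (\<lambda>_. C). P (restrict f D) \<and> Q (restrict f (X - D))}"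
  let ?R = "{g \<in> PiE D (\<lambda>_. C). P g} \<times> {h \<in> PiE (X - D) (\<lambda>_. C). Q h}"
  have "bij_betw (\<lambda>f. (restrict f D, restrict f (X - D))) ?L ?R"
  proof (rule bij_betw_imageI)
    show "inj_on (\<lambda>f. (restrict f D, restrict f (X - D))) ?L"
    proof (rule inj_onI)
      fix f g assume f: "f \<in> ?L" and g: "g \<in> ?L"
        and eq: "(restrict f D, restrict f (X - D)) = (restrict g D, restrict g (X - D))"
      show "f = g"
      proof (rule PiE_ext)
        show "f \<in> PiE X (\<lambda>_. C)" "g \<in> PiE X (\<lambda>_. C)" using f g by auto
        fix i assume "i \<in> X"
        then show "f i = g i" using eq
          by (cases "i \<in> D") (metis Pair_inject restrict_apply', metis Diff_iff Pair_inject restrict_apply')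
      qed
    qed
    show "(\<lambda>f. (restrict f D, restrict f (X - D))) ` ?L = ?R"
    proof
      show "(\<lambda>f. (restrict f D, restrict f (X - D))) ` ?L \<subseteq> ?R"
        using DX by (auto simp: PiE_iff)
      show "?R \<subseteq> (\<lambda>f. (restrict f D, restrict f (X - D))) ` ?L"
      proof
        fix gh assume gh: "gh \<in> ?R"
        obtain g h where ghd: "gh = (g, h)" by (cases gh)
        define f where "f = restrict (\<lambda>x. if x \<in> D then g x else h x) X"
        have g: "g \<in> PiE D (\<lambda>_. C)" "P g" and h: "h \<in> PiE (X - D) (\<lambda>_. C)" "Q h"
          using gh ghd by auto
        have rD: "restrict f D = g"
          using g(1) DX by (intro ext) (auto simp: f_def PiE_iff extensional_def)
        have rX: "restrict f (X - D) = h"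
          using h(1) DX by (intro ext) (auto simp: f_def PiE_iff extensional_def)
        have "f \<in> PiE X (\<lambda>_. C)" using g(1) h(1) by (auto simp: f_def PiE_iff)
        then have "f \<in> ?L" using rD rX g h by auto
        then show "gh \<in> (\<lambda>f. (restrict f D, restrict f (X - D))) ` ?L"
          using rD rX ghd by (intro image_eqI[of _ _ f]) auto
      qed
    qed
  qed
  then have "card ?L = card ?R" by (rule bij_betw_same_card)
  also have "\<dots> = card {g \<in> PiE D (\<lambda>_. C). P g} * card {h \<in> PiE (X - D) (\<lambda>_. C). Q h}"
    by (rule card_cartesian_product)
  finally show ?thesis .
qed


lemma S_bound:
  assumes finW: "finite W" and finE: "finite Es" and finC: "finite C"
    and sig: "\<sigma> \<in> PiE W (\<lambda>_. {(a,b) \<in> Es \<times> Es. a \<noteq> b})"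
  shows "card {g \<in> PiE (W \<times> Es) (\<lambda>_. C). \<forall>u\<in>W. g (u, fst (\<sigma> u)) = g (u, snd (\<sigma> u))}
           \<le> card C ^ (card (W \<times> Es) - card W)"
    and "card W \<le> card (W \<times> Es)"
proof -
  define D where "D = W \<times> Es"
  define Bs where "Bs = (\<lambda>u. (u, snd (\<sigma> u))) ` W"
  define extf where "extf g' = (\<lambda>x. if x \<in> Bs then g' (fst x, fst (\<sigma> (fst x))) else g' x)" for g' :: "'a \<times> 'b \<Rightarrow> 'c"
  have sigW: "\<And>u. u \<in> W \<Longrightarrow> fst (\<sigma> u) \<in> Es \<and> snd (\<sigma> u) \<in> Es \<and> fst (\<sigma> u) \<noteq> snd (\<sigma> u)"
    using sig by (auto simp: PiE_iff)
  have BsD: "Bs \<subseteq> D" using sigW by (auto simp: Bs_def D_def)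
  have cardBs: "card Bs = card W" unfolding Bs_def by (rule card_image) (auto intro: inj_onI)
  have finD: "finite D" using finW finE by (simp add: D_def)
  have "card Bs \<le> card D" using BsD finD by (intro card_mono)
  then show "card W \<le> card (W \<times> Es)" using cardBs by (simp add: D_def)
  have sub: "{g \<in> PiE D (\<lambda>_. C). \<forall>u\<in>W. g (u, fst (\<sigma> u)) = g (u, snd (\<sigma> u))}
      \<subseteq> extf ` PiE (D - Bs) (\<lambda>_. C)"
  proof
    fix g assume g: "g \<in> {g \<in> PiE D (\<lambda>_. C). \<forall>u\<in>W. g (u, fst (\<sigma> u)) = g (u, snd (\<sigma> u))}"
    have "g = extf (restrict g (D - Bs))"
    proof (rule ext)
      fix x
      show "g x = extf (restrict g (D - Bs)) x"
      proof (cases "x \<in> Bs")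
        case True
        then obtain u where u: "u \<in> W" "x = (u, snd (\<sigma> u))" by (auto simp: Bs_def)
        have "(u, fst (\<sigma> u)) \<in> D" using sigW u by (auto simp: D_def)
        moreover have "(u, fst (\<sigma> u)) \<notin> Bs" using sigW u by (auto simp: Bs_def)
        ultimately have "extf (restrict g (D - Bs)) x = g (u, fst (\<sigma> u))"
          using True u by (simp add: extf_def)
        also have "\<dots> = g (u, snd (\<sigma> u))" using g u by blast
        finally show ?thesis using u by simp
      next
        case False
        then have e: "extf (restrict g (D - Bs)) x = restrict g (D - Bs) x" by (simp add: extf_def)
        show ?thesis
        proof (cases "x \<in> D")
          case True
          then show ?thesis using e False by simp
        next
          case F2: False
          have "g x = undefined" using g F2 by (auto intro: PiE_arb)
          then show ?thesis using e F2 by simp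
        qed
      qed
    qed
    moreover have "restrict g (D - Bs) \<in> PiE (D - Bs) (\<lambda>_. C)" using g by (auto simp: PiE_iff)
    ultimately show "g \<in> extf ` PiE (D - Bs) (\<lambda>_. C)" by blast
  qed
  have "card {g \<in> PiE D (\<lambda>_. C). \<forall>u\<in>W. g (u, fst (\<sigma> u)) = g (u, snd (\<sigma> u))}
      \<le> card (extf ` PiE (D - Bs) (\<lambda>_. C))"
    by (rule card_mono[OF _ sub]) (use finD finC in \<open>auto intro: finite_PiE\<close>)
  also have "\<dots> \<le> card (PiE (D - Bs) (\<lambda>_. C))" by (rule card_image_le) (use finD finC in \<open>auto intro: finite_PiE\<close>)
  also have "\<dots> = card C ^ card (D - Bs)" using finD by (simp add: card_PiE)
  also have "card (D - Bs) = card D - card W" using cardBs BsD finD by (simp add: card_Diff_subset finite_subset)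
  finally show "card {g \<in> PiE (W \<times> Es) (\<lambda>_. C). \<forall>u\<in>W. g (u, fst (\<sigma> u)) = g (u, snd (\<sigma> u))}
           \<le> card C ^ (card (W \<times> Es) - card W)" by (simp add: D_def)
qed


lemma bad_count:
  assumes finW: "finite W" and finE: "finite Es" and finC: "finite C" and k: "card C = k" "0 < k"
  shows "real (card {g \<in> PiE (W \<times> Es) (\<lambda>_. C). \<forall>u\<in>W. \<not> inj_on (\<lambda>e. g (u,e)) Es})
     \<le> (real (card Es)^2 / real k) ^ card W * real k ^ card (W \<times> Es)"
proof -
  define Pairs where "Pairs = {(a,b) \<in> Es \<times> Es. a \<noteq> b}"
  define S where "S \<sigma> = {g \<in> PiE (W \<times> Es) (\<lambda>_. C). \<forall>u\<in>W. g (u, fst (\<sigma> u)) = g (u, snd (\<sigma> u))}" for \<sigma>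
  define Bad where "Bad = {g \<in> PiE (W \<times> Es) (\<lambda>_. C). \<forall>u\<in>W. \<not> inj_on (\<lambda>e. g (u,e)) Es}"
  have PE: "Pairs \<subseteq> Es \<times> Es" by (auto simp: Pairs_def)
  have finP: "finite Pairs" using finE by (intro finite_subset[OF PE]) simp
  have finPi: "finite (PiE W (\<lambda>_. Pairs))" using finW finP by (intro finite_PiE) auto
  have sub: "Bad \<subseteq> (\<Union>\<sigma>\<in>PiE W (\<lambda>_. Pairs). S \<sigma>)"
  proof
    fix g assume g: "g \<in> Bad"
    have "\<forall>u\<in>W. \<exists>p. p \<in> Pairs \<and> g (u, fst p) = g (u, snd p)"
    proof
      fix u assume "u \<in> W"
      then have "\<not> inj_on (\<lambda>e. g (u,e)) Es" using g by (auto simp: Bad_def)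
      then obtain a b where "a \<in> Es" "b \<in> Es" "a \<noteq> b" "g (u,a) = g (u,b)"
        by (auto simp: inj_on_def)
      then show "\<exists>p. p \<in> Pairs \<and> g (u, fst p) = g (u, snd p)"
        by (intro exI[of _ "(a,b)"]) (auto simp: Pairs_def)
    qed
    then obtain \<sigma> where sig: "\<forall>u\<in>W. \<sigma> u \<in> Pairs \<and> g (u, fst (\<sigma> u)) = g (u, snd (\<sigma> u))"
      by metis
    have "restrict \<sigma> W \<in> PiE W (\<lambda>_. Pairs)" using sig by auto
    moreover have "g \<in> S (restrict \<sigma> W)" using g sig by (auto simp: S_def Bad_def)
    ultimately show "g \<in> (\<Union>\<sigma>\<in>PiE W (\<lambda>_. Pairs). S \<sigma>)" by blast
  qed
  have "card Bad \<le> card (\<Union>\<sigma>\<in>PiE W (\<lambda>_. Pairs). S \<sigma>)"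
    by (rule card_mono[OF _ sub]) (use finPi finW finE finC in \<open>auto simp: S_def intro!: finite_PiE finite_subset[OF Collect_restrict]\<close>)
  also have "\<dots> \<le> (\<Sum>\<sigma>\<in>PiE W (\<lambda>_. Pairs). card (S \<sigma>))" by (rule card_UN_le[OF finPi])
  finally have c1: "real (card Bad) \<le> (\<Sum>\<sigma>\<in>PiE W (\<lambda>_. Pairs). real (card (S \<sigma>)))"
    by (simp flip: of_nat_sum)
  have c2: "real (card (S \<sigma>)) \<le> real k ^ card (W \<times> Es) / real k ^ card W" if s: "\<sigma> \<in> PiE W (\<lambda>_. Pairs)" for \<sigma>
  proof -
    have a: "card (S \<sigma>) \<le> k ^ (card (W \<times> Es) - card W)" "card W \<le> card (W \<times> Es)"
      using S_bound[OF finW finE finC, of \<sigma>] s k by (auto simp: S_def Pairs_def)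
    have "real (card (S \<sigma>)) \<le> real k ^ (card (W \<times> Es) - card W)"
      using a(1) by (metis of_nat_le_iff of_nat_power)
    also have "\<dots> = real k ^ card (W \<times> Es) / real k ^ card W"
      using a(2) k by (simp add: power_diff)
    finally show ?thesis .
  qed
  have "real (card Bad) \<le> (\<Sum>\<sigma>\<in>PiE W (\<lambda>_. Pairs). real k ^ card (W \<times> Es) / real k ^ card W)"
    using c1 c2 sum_mono by (smt (verit))
  also have "\<dots> = real (card Pairs) ^ card W * (real k ^ card (W \<times> Es) / real k ^ card W)"
    using finW by (simp add: card_PiE)
  also have "\<dots> \<le> (real (card Es)^2) ^ card W * (real k ^ card (W \<times> Es) / real k ^ card W)"
  proof (intro mult_right_mono power_mono)
    have "card Pairs \<le> card (Es \<times> Es)" by (rule card_mono[OF _ PE]) (simp add: finE)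
    then have "card Pairs \<le> card Es * card Es" by (simp add: card_cartesian_product)
    then show "real (card Pairs) \<le> real (card Es)^2" unfolding power2_eq_square
      by (metis of_nat_le_iff of_nat_mult)
  qed auto
  also have "\<dots> = (real (card Es)^2 / real k) ^ card W * real k ^ card (W \<times> Es)"
    by (simp add: power_divide)
  finally show ?thesis by (simp add: Bad_def)
qed



definition EW :: "nat \<Rightarrow> nat set \<Rightarrow> nat set set" where
  "EW r W = {e. e \<subseteq> W \<and> card e = r}"

definition badW :: "nat \<Rightarrow> nat set \<Rightarrow> (nat \<times> nat set \<Rightarrow> nat) \<Rightarrow> bool" where
  "badW r W g \<longleftrightarrow> (\<forall>u\<in>W. \<not> inj_on (\<lambda>e. g (u,e)) (EW r W))"

lemma badW_cong:
  assumes "\<And>u e. u \<in> W \<Longrightarrow> e \<in> EW r W \<Longrightarrow> g (u,e) = g' (u,e)"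
  shows "badW r W g = badW r W g'"
proof -
  have "inj_on (\<lambda>e. g (u,e)) (EW r W) = inj_on (\<lambda>e. g' (u,e)) (EW r W)" if "u \<in> W" for u
    using assms that by (intro inj_on_cong) auto
  then show ?thesis by (auto simp: badW_def)
qed

lemma nbr_count:
  assumes e: "card e = r" "e \<subseteq> {..<n}" and rh: "r \<le> h"
  shows "card {W'. W' \<subseteq> {..<n} \<and> card W' = h \<and> e \<subseteq> W'} \<le> n ^ (h - r)"
proof -
  let ?L = "{W'. W' \<subseteq> {..<n} \<and> card W' = h \<and> e \<subseteq> W'}"
  have inj: "inj_on (\<lambda>W'. W' - e) ?L" by (rule inj_onI) blast
  have img: "(\<lambda>W'. W' - e) ` ?L \<subseteq> {S. S \<subseteq> {..<n} \<and> card S = h - r}"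
  proof
    fix S assume "S \<in> (\<lambda>W'. W' - e) ` ?L"
    then obtain W' where W': "W' \<subseteq> {..<n}" "card W' = h" "e \<subseteq> W'" "S = W' - e" by auto
    have "finite W'" using W'(1) finite_subset by blast
    then have "card S = h - r" using W' e card_Diff_subset[of e W'] finite_subset[of e W'] by simp
    then show "S \<in> {S. S \<subseteq> {..<n} \<and> card S = h - r}" using W' by auto
  qed
  have "card ?L = card ((\<lambda>W'. W' - e) ` ?L)" using inj by (simp add: card_image)
  also have "\<dots> \<le> card {S. S \<subseteq> {..<n} \<and> card S = h - r}" by (rule card_mono[OF _ img]) auto
  also have "\<dots> = n choose (h - r)" using n_subsets[of "{..<n}" "h - r"] by simp
  also have "\<dots> \<le> n ^ (h - r)"
  proof (cases "h - r \<le> n")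
    case True then show ?thesis by (rule binomial_le_pow)
  next
    case False then show ?thesis by (simp add: binomial_eq_0)
  qed
  finally show ?thesis .
qed



lemma exists_coloring:
  fixes n r h k :: nat
  assumes r1: "1 \<le> r" and rh: "r \<le> h" and n1: "1 \<le> n" and k1: "1 \<le> k"
    and cond: "4 * real h ^ (2*r*h + r) * real n ^ (h - r) \<le> real k ^ h"
  shows "\<exists>f. (\<forall>v<n. \<forall>e\<in>complete_edges n r. f v e \<in> {1..k}) \<and>
             (\<forall>W. W \<subseteq> {..<n} \<and> card W = h \<longrightarrow> (\<exists>u\<in>W. inj_on (f u) (EW r W)))"
proof -
  define X where "X = {..<n} \<times> complete_edges n r"
  define C where "C = {1..k}"
  define Om where "Om = PiE X (\<lambda>_. C)"
  define I where "I = {W. W \<subseteq> {..<n} \<and> card W = h}"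
  define DW where "DW W = W \<times> EW r W" for W
  define A where "A W = {f \<in> Om. badW r W f}" for W
  define N where "N W = {W' \<in> I. W' \<noteq> W \<and> DW W \<inter> DW W' \<noteq> {}}" for W
  define p where "p = (real (h choose r)^2 / real k)^h"
  define d where "d = real h ^ r * real n ^ (h - r)"
  have finCE: "finite (complete_edges n r)"
    by (rule finite_subset[of _ "Pow {..<n}"]) (auto simp: complete_edges_def)
  have finX: "finite X" using finCE by (simp add: X_def)
  have finC: "finite C" and cardC: "card C = k" by (auto simp: C_def)
  have finOm: "finite Om" using finX finC by (auto simp: Om_def intro: finite_PiE)
  have neOm: "Om \<noteq> {}" using k1 by (auto simp: Om_def C_def PiE_eq_empty_iff)
  have finI: "finite I" by (rule finite_subset[of _ "Pow {..<n}"]) (auto simp: I_def)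
  have DWX: "DW W \<subseteq> X" if "W \<in> I" for W
    using that by (auto simp: DW_def EW_def X_def I_def complete_edges_def)
  have cardEW: "card (EW r W) = h choose r" if "W \<in> I" for W
  proof -
    have "finite W" using that by (auto simp: I_def intro: finite_subset)
    then show ?thesis using n_subsets[of W r] that by (simp add: EW_def I_def)
  qed
  have finEW: "finite (EW r W)" if "W \<in> I" for W
    using that by (auto simp: EW_def I_def intro: finite_subset[of _ "Pow W"] finite_subset)
  have d1: "1 \<le> d"
  proof -
    have "1 \<le> real h ^ r" using rh r1 by (intro one_le_power) simp
    moreover have "1 \<le> real n ^ (h - r)" using n1 by (intro one_le_power) simp
    ultimately show ?thesis unfolding d_def by (metis mult_mono mult_1 zero_le_one order_trans)
  qed
  have p0: "0 \<le> p" by (simp add: p_def)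
  have pd: "4 * p * d \<le> 1"
  proof -
    have hk: "0 < real k ^ h" using k1 by simp
    have b: "real (h choose r) ^ 2 \<le> real h ^ (2*r)"
    proof -
      have "h choose r \<le> h ^ r" using rh by (rule binomial_le_pow)
      then have "real (h choose r) \<le> real h ^ r" by (metis of_nat_le_iff of_nat_power)
      then have "real (h choose r) ^ 2 \<le> (real h ^ r) ^ 2" by (intro power_mono) auto
      then show ?thesis by (simp add: power_mult[symmetric] mult.commute)
    qed
    have "p = real (h choose r) ^ (2*h) / real k ^ h" by (simp add: p_def power_divide power_mult)
    also have "\<dots> \<le> real h ^ (2*r*h) / real k ^ h"
    proof (rule divide_right_mono)
      have "real (h choose r) ^ (2*h) = (real (h choose r) ^ 2) ^ h" by (simp add: power_mult)
      also have "\<dots> \<le> (real h ^ (2*r)) ^ h" using b by (intro power_mono) auto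
      also have "\<dots> = real h ^ (2*r*h)" by (simp add: power_mult)
      finally show "real (h choose r) ^ (2*h) \<le> real h ^ (2*r*h)" .
    qed (use hk in auto)
    finally have "4 * p * d \<le> 4 * (real h ^ (2*r*h) / real k ^ h) * d"
      using d1 by (intro mult_right_mono mult_left_mono) auto
    also have "\<dots> = (4 * real h ^ (2*r*h + r) * real n ^ (h - r)) / real k ^ h"
      by (simp add: d_def power_add)
    also have "\<dots> \<le> 1" using cond hk by simp
    finally show ?thesis .
  qed
  have NI: "N W \<subseteq> I" for W by (auto simp: N_def)
  have deg: "real (card (N W)) \<le> d" if W: "W \<in> I" for W
  proof -
    have sub: "N W \<subseteq> (\<Union>e\<in>EW r W. {W'. W' \<subseteq> {..<n} \<and> card W' = h \<and> e \<subseteq> W'})"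
    proof
      fix W' assume "W' \<in> N W"
      then obtain u e where "W' \<in> I" "(u,e) \<in> DW W" "(u,e) \<in> DW W'" by (auto simp: N_def)
      then show "W' \<in> (\<Union>e\<in>EW r W. {W'. W' \<subseteq> {..<n} \<and> card W' = h \<and> e \<subseteq> W'})"
        by (auto simp: DW_def EW_def I_def)
    qed
    have "card (N W) \<le> card (\<Union>e\<in>EW r W. {W'. W' \<subseteq> {..<n} \<and> card W' = h \<and> e \<subseteq> W'})"
      by (rule card_mono[OF _ sub]) (rule finite_subset[OF _ finI], auto simp: I_def)
    also have "\<dots> \<le> (\<Sum>e\<in>EW r W. card {W'. W' \<subseteq> {..<n} \<and> card W' = h \<and> e \<subseteq> W'})"
      by (rule card_UN_le) (rule finEW[OF W])
    also have "\<dots> \<le> (\<Sum>e\<in>EW r W. n ^ (h - r))"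
    proof (rule sum_mono)
      fix e assume "e \<in> EW r W"
      then show "card {W'. W' \<subseteq> {..<n} \<and> card W' = h \<and> e \<subseteq> W'} \<le> n ^ (h - r)"
        using W rh by (intro nbr_count) (auto simp: EW_def I_def)
    qed
    also have "\<dots> = (h choose r) * n ^ (h - r)" using cardEW[OF W] by simp
    also have "\<dots> \<le> h ^ r * n ^ (h - r)" using rh by (intro mult_right_mono binomial_le_pow) auto
    finally have "card (N W) \<le> h ^ r * n ^ (h - r)" .
    then show ?thesis unfolding d_def by (metis of_nat_le_iff of_nat_mult of_nat_power)
  qed
  have ind: "real (card (A W \<inter> (Om - \<Union>(A ` T)))) \<le> p * real (card (Om - \<Union>(A ` T)))"
    if W: "W \<in> I" and T: "T \<subseteq> I - N W - {W}" for W T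
  proof -
    let ?D = "DW W"
    define Q where "Q g = (\<forall>W'\<in>T. \<not> badW r W' g)" for g
    have disj: "DW W' \<subseteq> X - ?D" if "W' \<in> T" for W'
      using that T DWX by (auto simp: N_def)
    have bad_r: "badW r W f = badW r W (restrict f ?D)" for f
      by (rule badW_cong) (auto simp: DW_def)
    have Q_r: "Q f = Q (restrict f (X - ?D))" for f
    proof -
      have "badW r W' f = badW r W' (restrict f (X - ?D))" if "W' \<in> T" for W'
        using disj[OF that] by (intro badW_cong) (auto simp: DW_def)
      then show ?thesis by (auto simp: Q_def)
    qed
    have eqB: "Om - \<Union>(A ` T) = {f \<in> Om. (\<lambda>_. True) (restrict f ?D) \<and> Q (restrict f (X - ?D))}"
      using Q_r by (auto simp: A_def Q_def)
    have eqAB: "A W \<inter> (Om - \<Union>(A ` T)) = {f \<in> Om. badW r W (restrict f ?D) \<and> Q (restrict f (X - ?D))}"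
      using Q_r bad_r by (auto simp: A_def Q_def)
    define q where "q = card {g \<in> PiE (X - ?D) (\<lambda>_. C). Q g}"
    define a where "a = card {g \<in> PiE ?D (\<lambda>_. C). badW r W g}"
    have "card {f \<in> Om. badW r W (restrict f ?D) \<and> Q (restrict f (X - ?D))} = a * q"
      unfolding Om_def a_def q_def by (rule card_split[OF finX DWX[OF W]])
    then have cAB: "card (A W \<inter> (Om - \<Union>(A ` T))) = a * q" using eqAB by simp
    have "card {f \<in> Om. (\<lambda>_. True) (restrict f ?D) \<and> Q (restrict f (X - ?D))} = card {g \<in> PiE ?D (\<lambda>_. C). (\<lambda>_. True) g} * q"
      unfolding Om_def q_def by (rule card_split[OF finX DWX[OF W]])
    then have "card (Om - \<Union>(A ` T)) = card {g \<in> PiE ?D (\<lambda>_. C). True} * q" using eqB by simp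
    also have "card {g \<in> PiE ?D (\<lambda>_. C). True} = k ^ card ?D"
      using DWX[OF W] finX cardC by (simp add: card_PiE finite_subset)
    finally have cB: "card (Om - \<Union>(A ` T)) = k ^ card ?D * q" .
    have "real a \<le> (real (card (EW r W))^2 / real k) ^ card W * real k ^ card (W \<times> EW r W)"
      unfolding a_def badW_def DW_def
      by (rule bad_count) (use W finEW[OF W] finC cardC k1 in \<open>auto simp: I_def intro: finite_subset\<close>)
    also have "\<dots> = p * real k ^ card ?D" using W cardEW[OF W] by (simp add: p_def DW_def I_def)
    finally have "real a * real q \<le> p * real k ^ card ?D * real q" by (intro mult_right_mono) auto
    then show ?thesis using cAB cB by simp
  qed
  have "Om - \<Union>(A ` I) \<noteq> {}"
    by (rule lll_simple[OF finOm neOm finI NI deg d1 p0 pd ind])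
  then obtain f where f: "f \<in> Om" "\<And>W. W \<in> I \<Longrightarrow> \<not> badW r W f" by (auto simp: A_def)
  show ?thesis
  proof (intro exI[of _ "\<lambda>v e. f (v,e)"] conjI allI impI ballI)
    fix v e assume "v < n" "e \<in> complete_edges n r"
    then show "f (v,e) \<in> {1..k}" using f(1) by (auto simp: Om_def X_def C_def PiE_iff)
  next
    fix W assume "W \<subseteq> {..<n} \<and> card W = h"
    then have "\<not> badW r W f" using f(2) by (auto simp: I_def)
    then show "\<exists>u\<in>W. inj_on (\<lambda>e. f (u,e)) (EW r W)" by (auto simp: badW_def)
  qed
qed



lemma copy_ok:
  assumes rg: "is_rgraph r V E"
    and good: "\<forall>W. W \<subseteq> {..<n} \<and> card W = card V \<longrightarrow> (\<exists>u\<in>W. inj_on (f u) (EW r W))"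
    and cop: "is_copy n V E W F"
  shows "\<exists>u\<in>W. inj_on (f u) F"
proof -
  obtain g where W: "W \<subseteq> {..<n}" and g: "bij_betw g V W" and F: "F = (\<lambda>e. g ` e) ` E"
    using cop by (auto simp: is_copy_def)
  have cW: "card W = card V" using g by (simp add: bij_betw_same_card)
  have FE: "F \<subseteq> EW r W"
  proof
    fix x assume "x \<in> F"
    then obtain e where e: "e \<in> E" "x = g ` e" using F by auto
    have eV: "e \<subseteq> V" "card e = r" using rg e by (auto simp: is_rgraph_def)
    have "inj_on g e" using g eV by (auto simp: bij_betw_def intro: inj_on_subset)
    then have "card x = r" using e eV by (simp add: card_image)
    moreover have "x \<subseteq> W" using g eV e by (auto simp: bij_betw_def)
    ultimately show "x \<in> EW r W" by (simp add: EW_def)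
  qed
  obtain u where "u \<in> W" "inj_on (f u) (EW r W)" using good W cW by blast
  then show ?thesis using FE by (meson inj_on_subset)
qed

theorem theorem6:
  "\<exists>c>0. \<forall>(r::nat) (n::nat) (V::nat set) E.
     is_rgraph r V E \<longrightarrow> 1 \<le> r \<longrightarrow> r \<le> card V \<longrightarrow>
     real (local_chromatic r n V E)
       \<le> c * real n powr ((real (card V) - real r) / real (card V))
           * real (card V) powr (2 * real r + real r / real (card V))"
proof (intro exI[of _ "8::real"] conjI allI impI)
  fix r n :: nat and V :: "nat set" and E
  assume rg: "is_rgraph r V E" and r1: "1 \<le> r" and rV: "r \<le> card V"
  define h where "h = card V"
  have h1: "1 \<le> h" using r1 rV by (simp add: h_def)
  show "real (local_chromatic r n V E)
       \<le> 8 * real n powr ((real (card V) - real r) / real (card V))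
           * real (card V) powr (2 * real r + real r / real (card V))"
  proof (cases "n = 0")
    case True
    have "local_coloring n r V E 0 (\<lambda>_ _. 0)"
      unfolding local_coloring_def
    proof (intro conjI allI impI)
      fix W F assume "is_copy n V E W F"
      then obtain g where "W \<subseteq> {..<n}" "bij_betw g V W" by (auto simp: is_copy_def)
      then have "card V = 0" using True by (simp add: bij_betw_same_card)
      then show "\<exists>u\<in>W. inj_on ((\<lambda>_ _. 0) u) F" using h1 h_def by simp
    qed (use True in simp)
    then have "local_chromatic r n V E \<le> 0" unfolding local_chromatic_def by (intro Least_le) blast
    then show ?thesis using True by simp
  next
    case False
    then have n1: "1 \<le> n" by simp
    define a where "a = (real h - real r) / real h"
    define b where "b = 2 * real r + real r / real h"
    define K1 where "K1 = 4 * real n powr a * real h powr b"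
    have a0: "0 \<le> a" using rV h1 by (simp add: a_def h_def)
    have b0: "0 \<le> b" by (simp add: b_def)
    have na: "1 \<le> real n powr a" using n1 a0 by (intro ge_one_powr_ge_zero) auto
    have hb: "1 \<le> real h powr b" using h1 b0 by (intro ge_one_powr_ge_zero) auto
    have "1 * 1 \<le> real n powr a * real h powr b" by (rule mult_mono) (use na hb in auto)
    then have K4: "4 \<le> K1" unfolding K1_def by simp
    define k where "k = nat \<lceil>K1\<rceil>"
    have kK: "K1 \<le> real k" "real k \<le> K1 + 1" using K4 by (auto simp: k_def)
    have k1: "1 \<le> k" using kK K4 by simp
    have pa: "(real n powr a) ^ h = real n ^ (h - r)"
    proof -
      have "(real n powr a) ^ h = (real n powr a) powr real h"
        using n1 by (simp add: powr_realpow)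
      also have "\<dots> = real n powr (a * real h)" by (simp add: powr_powr)
      also have "a * real h = real (h - r)" using h1 rV by (simp add: a_def h_def of_nat_diff)
      also have "real n powr real (h - r) = real n ^ (h - r)" using n1 by (simp add: powr_realpow)
      finally show ?thesis .
    qed
    have pb: "(real h powr b) ^ h = real h ^ (2*r*h + r)"
    proof -
      have "(real h powr b) ^ h = (real h powr b) powr real h"
        using h1 by (simp add: powr_realpow)
      also have "\<dots> = real h powr (b * real h)" by (simp add: powr_powr)
      also have "b * real h = real (2*r*h + r)" using h1 by (simp add: b_def field_simps)
      also have "real h powr real (2*r*h + r) = real h ^ (2*r*h + r)"
        using h1 powr_realpow[of "real h" "2*r*h + r"] by linarith
      finally show ?thesis .
    qed
    have cond: "4 * real h ^ (2*r*h + r) * real n ^ (h - r) \<le> real k ^ h"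
    proof -
      have "K1 ^ h = 4 ^ h * real n ^ (h - r) * real h ^ (2*r*h + r)"
        unfolding K1_def by (simp add: power_mult_distrib pa pb)
      moreover have "(4::real) \<le> 4 ^ h" 
        using power_increasing[of 1 h "4::real"] h1 by simp
      moreover have "0 \<le> real h ^ (2*r*h + r) * real n ^ (h - r)" by simp
      ultimately have "4 * (real h ^ (2*r*h + r) * real n ^ (h - r)) \<le> 4 ^ h * (real h ^ (2*r*h + r) * real n ^ (h - r))"
        by (intro mult_right_mono) auto
      also have "\<dots> = K1 ^ h" using \<open>K1 ^ h = _\<close> by (simp add: mult_ac)
      finally have "4 * real h ^ (2*r*h + r) * real n ^ (h - r) \<le> K1 ^ h" by (simp add: mult_ac)
      also have "\<dots> \<le> real k ^ h" using kK K4 by (intro power_mono) auto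
      finally show ?thesis .
    qed
    obtain f where f: "\<forall>v<n. \<forall>e\<in>complete_edges n r. f v e \<in> {1..k}"
      "\<forall>W. W \<subseteq> {..<n} \<and> card W = h \<longrightarrow> (\<exists>u\<in>W. inj_on (f u) (EW r W))"
      using exists_coloring[OF r1 _ n1 k1 cond] rV h_def by blast
    have "local_coloring n r V E k f"
      unfolding local_coloring_def using f copy_ok[OF rg, of n f] h_def by blast
    then have "local_chromatic r n V E \<le> k" unfolding local_chromatic_def by (intro Least_le) blast
    then have "real (local_chromatic r n V E) \<le> K1 + 1" using kK by linarith
    also have "\<dots> \<le> 2 * K1" using K4 by simp
    also have "\<dots> = 8 * real n powr ((real (card V) - real r) / real (card V))
           * real (card V) powr (2 * real r + real r / real (card V))"
      by (simp add: K1_def a_def b_def h_def)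
    finally show ?thesis .
  qed
qed simp


end
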